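(* Let $G$ be a free nilpotent group of class $d\in\mathbb{N}$ with free generators $g_i=g_{1,i}$, $i=1,\dots,n=\mathrm{rk}(G)$. Then for any $d'<d$ and any polynomial maps $\xi_i\colon G\to\mathbb{R}$, $i=1,\dots,n$, of degree at most $d'$, there is a polynomial map $\xi\colon G\to\mathbb{R}$ of degree at most $d'+1$ such that $\partial_{g_i}\xi=\xi_i$ for all $i$.
   Context: The free nilpotent group of class $d$ on $n$ generators is $F_n/(F_n)_{[d+1]}$ where $F_n$ is the free group and $(\cdot)_{[k]}$ the lower central series. $(\partial_g\xi)(h)=\xi(g^{-1}h)-\xi(h)$; $\xi$ is a polynomial of degree at most $d$ if $\partial_{g_1}\cdots\partial_{g_{d+1}}\xi\equiv0$ for all $g_1,\dots,g_{d+1}\in G$. *)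

theory Defs
  imports "HOL-Algebra.Algebra" Complex_Main
begin

text \<open>A letter (i, True) is the generator x_i, (i, False) is its inverse.\<close>

definition cancels :: "nat \<times> bool \<Rightarrow> nat \<times> bool \<Rightarrow> bool" where
  "cancels a b \<longleftrightarrow> fst a = fst b \<and> snd a \<noteq> snd b"

definition reduce :: "(nat \<times> bool) list \<Rightarrow> (nat \<times> bool) list" where
  "reduce w = foldr (\<lambda>x acc. case acc of [] \<Rightarrow> [x]
                       | y # ys \<Rightarrow> (if cancels x y then ys else x # y # ys)) w []"

definition free_group :: "nat \<Rightarrow> (nat \<times> bool) list monoid" where
  "free_group n = \<lparr> carrier = {w. set w \<subseteq> {0..<n} \<times> UNIV \<and> reduce w = w},
                    monoid.mult = (\<lambda>u v. reduce (u @ v)),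
                    one = [] \<rparr>"

section \<open>Lower central series, indexed from 1: G_[1] = G, G_[k+1] = [G, G_[k]]\<close>

fun lower_central :: "('a, 'b) monoid_scheme \<Rightarrow> nat \<Rightarrow> 'a set" where
  "lower_central G 0 = carrier G"
| "lower_central G (Suc 0) = carrier G"
| "lower_central G (Suc (Suc k)) =
     generate G {x \<otimes>\<^bsub>G\<^esub> y \<otimes>\<^bsub>G\<^esub> inv\<^bsub>G\<^esub> x \<otimes>\<^bsub>G\<^esub> inv\<^bsub>G\<^esub> y
                 | x y. x \<in> carrier G \<and> y \<in> lower_central G (Suc k)}"

definition free_nilpotent_with_gens ::
    "('g, 'b) monoid_scheme \<Rightarrow> nat \<Rightarrow> nat \<Rightarrow> (nat \<Rightarrow> 'g) \<Rightarrow> bool" where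
  "free_nilpotent_with_gens G d n g \<longleftrightarrow> group G \<and>
     (\<exists>\<phi>. \<phi> \<in> hom (free_group n) G \<and> \<phi> ` carrier (free_group n) = carrier G \<and>
          kernel (free_group n) G \<phi> = lower_central (free_group n) (Suc d) \<and>
          (\<forall>i<n. \<phi> [(i, True)] = g i))"

definition diffop :: "('g, 'b) monoid_scheme \<Rightarrow> 'g \<Rightarrow> ('g \<Rightarrow> real) \<Rightarrow> 'g \<Rightarrow> real" where
  "diffop G g \<xi> h = \<xi> (inv\<^bsub>G\<^esub> g \<otimes>\<^bsub>G\<^esub> h) - \<xi> h"

definition poly_deg_le :: "('g, 'b) monoid_scheme \<Rightarrow> nat \<Rightarrow> ('g \<Rightarrow> real) \<Rightarrow> bool" where
  "poly_deg_le G k \<xi> \<longleftrightarrow>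
     (\<forall>gs. length gs = Suc k \<and> set gs \<subseteq> carrier G \<longrightarrow>
        (\<forall>h\<in>carrier G. foldr (diffop G) gs \<xi> h = 0))"

end

theory Submission
  imports Defs
begin


definition step :: "nat \<times> bool \<Rightarrow> (nat \<times> bool) list \<Rightarrow> (nat \<times> bool) list" where
  "step x acc = (case acc of [] \<Rightarrow> [x] | y # ys \<Rightarrow> (if cancels x y then ys else x # y # ys))"

lemma reduce_foldr: "reduce w = foldr step w []"
  unfolding reduce_def step_def by simp

fun rd :: "(nat \<times> bool) list \<Rightarrow> bool" where
  "rd [] = True" | "rd [x] = True" | "rd (x # y # ys) = (\<not> cancels x y \<and> rd (y # ys))"

lemma rd_tl: "rd (x # ys) \<Longrightarrow> rd ys"
  by (cases ys) auto

lemma rd_step: "rd acc \<Longrightarrow> rd (step x acc)"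
  by (cases acc) (auto simp: step_def dest: rd_tl)

lemma rd_foldr: "rd acc \<Longrightarrow> rd (foldr step w acc)"
  by (induction w) (auto intro: rd_step)

lemma rd_reduce: "rd (reduce w)"
  unfolding reduce_foldr by (rule rd_foldr) simp

lemma reduce_rd: "rd w \<Longrightarrow> reduce w = w"
proof (induction w)
  case Nil then show ?case by (simp add: reduce_foldr)
next
  case (Cons x w)
  then have "reduce w = w" using rd_tl by blast
  then show ?case using Cons.prems by (cases w) (auto simp: reduce_foldr step_def)
qed

lemma reduce_reduce: "reduce (reduce w) = reduce w"
  by (rule reduce_rd[OF rd_reduce])

lemma cancels_trans: "cancels x y \<Longrightarrow> cancels y z \<Longrightarrow> x = z"
  by (cases x; cases y; cases z) (auto simp: cancels_def)

lemma step_cancel: "cancels x y \<Longrightarrow> rd t \<Longrightarrow> step x (step y t) = t"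
proof (cases t)
  case Nil
  assume "cancels x y" then show ?thesis using Nil by (simp add: step_def)
next
  case (Cons z zs)
  assume c: "cancels x y" and r: "rd t"
  show ?thesis
  proof (cases "cancels y z")
    case True
    then have xz: "x = z" using cancels_trans c by blast
    show ?thesis
    proof (cases zs)
      case Nil then show ?thesis using True Cons xz by (simp add: step_def)
    next
      case (Cons w ws)
      then show ?thesis using True \<open>t = z # zs\<close> xz r by (simp add: step_def)
    qed
  next
    case False
    then show ?thesis using c Cons by (simp add: step_def)
  qed
qed

lemma foldr_step_reduce: "rd s \<Longrightarrow> foldr step u s = foldr step (reduce u) s"
proof (induction u)
  case Nil then show ?case by (simp add: reduce_foldr)
next
  case (Cons x u)
  have IH: "foldr step u s = foldr step (reduce u) s" using Cons by blast
  have r: "rd (reduce u)" by (rule rd_reduce)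
  have "step x (foldr step (reduce u) s) = foldr step (step x (reduce u)) s"
  proof (cases "reduce u")
    case Nil then show ?thesis by (simp add: step_def)
  next
    case (Cons y ys)
    show ?thesis
    proof (cases "cancels x y")
      case True
      have "rd (foldr step ys s)" using Cons.prems by (rule rd_foldr)
      then show ?thesis using True \<open>reduce u = y # ys\<close> step_cancel by (simp add: step_def)
    next
      case False then show ?thesis using \<open>reduce u = y # ys\<close> by (simp add: step_def)
    qed
  qed
  then show ?case using IH by (simp add: reduce_foldr)
qed

lemma reduce_append: "reduce (u @ v) = foldr step u (reduce v)"
  by (simp add: reduce_foldr)

lemma reduce_assoc: "reduce (reduce (u @ v) @ w) = reduce (u @ reduce (v @ w))"
proof -
  have "reduce (reduce (u @ v) @ w) = foldr step (reduce (u @ v)) (reduce w)" by (rule reduce_append)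
  also have "\<dots> = foldr step (u @ v) (reduce w)" using foldr_step_reduce[OF rd_reduce] by metis
  also have "\<dots> = foldr step u (reduce (v @ w))" by (simp add: reduce_append)
  also have "\<dots> = reduce (u @ reduce (v @ w))" by (metis reduce_append reduce_reduce)
  finally show ?thesis .
qed

lemma set_step: "set (step x acc) \<subseteq> insert x (set acc)"
  by (cases acc) (auto simp: step_def)

lemma set_foldr_step: "set (foldr step w acc) \<subseteq> set w \<union> set acc"
  by (induction w) (use set_step in fastforce)+

lemma set_reduce: "set (reduce w) \<subseteq> set w"
  using set_foldr_step[of w "[]"] by (simp add: reduce_foldr)

definition finv :: "(nat \<times> bool) list \<Rightarrow> (nat \<times> bool) list" where
  "finv w = rev (map (\<lambda>(i, b). (i, \<not> b)) w)"

lemma reduce_finv: "reduce (finv w @ w) = []"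
proof (induction w)
  case Nil then show ?case by (simp add: finv_def reduce_foldr)
next
  case (Cons x w)
  obtain i b where x: "x = (i, b)" by force
  have c: "cancels (i, \<not> b) x" using x by (simp add: cancels_def)
  have "reduce (finv (x # w) @ x # w) = foldr step (finv w) (step (i, \<not> b) (step x (reduce w)))"
    by (simp add: finv_def x reduce_foldr)
  also have "\<dots> = foldr step (finv w) (reduce w)" using step_cancel[OF c rd_reduce] by simp
  also have "\<dots> = []" using Cons by (simp add: reduce_append)
  finally show ?case .
qed

lemma set_finv: "set (finv w) \<subseteq> {0..<n} \<times> UNIV \<longleftrightarrow> set w \<subseteq> {0..<n} \<times> UNIV"
  by (auto simp: finv_def)

lemma carrier_fg: "w \<in> carrier (free_group n) \<longleftrightarrow> set w \<subseteq> {0..<n} \<times> UNIV \<and> rd w"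
  by (auto simp: free_group_def intro: reduce_rd) (metis rd_reduce)

lemma mult_fg: "u \<otimes>\<^bsub>free_group n\<^esub> v = reduce (u @ v)"
  by (simp add: free_group_def)

lemma one_fg: "\<one>\<^bsub>free_group n\<^esub> = []"
  by (simp add: free_group_def)

lemma group_fg: "group (free_group n)"
proof (rule groupI)
  fix x y assume "x \<in> carrier (free_group n)" "y \<in> carrier (free_group n)"
  then show "x \<otimes>\<^bsub>free_group n\<^esub> y \<in> carrier (free_group n)"
    using set_reduce[of "x @ y"] by (auto simp: carrier_fg mult_fg rd_reduce)
next
  show "\<one>\<^bsub>free_group n\<^esub> \<in> carrier (free_group n)" by (simp add: carrier_fg one_fg)
next
  fix x y z assume "x \<in> carrier (free_group n)" "y \<in> carrier (free_group n)" "z \<in> carrier (free_group n)"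
  then show "x \<otimes>\<^bsub>free_group n\<^esub> y \<otimes>\<^bsub>free_group n\<^esub> z = x \<otimes>\<^bsub>free_group n\<^esub> (y \<otimes>\<^bsub>free_group n\<^esub> z)"
    by (simp add: mult_fg reduce_assoc)
next
  fix x assume "x \<in> carrier (free_group n)"
  then show "\<one>\<^bsub>free_group n\<^esub> \<otimes>\<^bsub>free_group n\<^esub> x = x"
    by (simp add: carrier_fg one_fg mult_fg reduce_rd)
next
  fix x assume x: "x \<in> carrier (free_group n)"
  show "\<exists>y\<in>carrier (free_group n). y \<otimes>\<^bsub>free_group n\<^esub> x = \<one>\<^bsub>free_group n\<^esub>"
  proof (intro bexI)
    have rx: "reduce x = x" using x by (simp add: carrier_fg reduce_rd)
    show "reduce (finv x) \<otimes>\<^bsub>free_group n\<^esub> x = \<one>\<^bsub>free_group n\<^esub>"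
      using foldr_step_reduce[of x "finv x"] rd_reduce[of x] rx reduce_finv[of x]
      by (simp add: mult_fg one_fg reduce_append)
    show "reduce (finv x) \<in> carrier (free_group n)"
      using x set_reduce[of "finv x"] set_finv[of x n] by (auto simp: carrier_fg rd_reduce)
  qed
qed

lemma inv_gen_fg: "i < n \<Longrightarrow> inv\<^bsub>free_group n\<^esub> [(i, True)] = [(i, False)]"
  by (rule group.inv_equality[OF group_fg])
     (auto simp: mult_fg one_fg carrier_fg reduce_foldr step_def cancels_def)

lemma cons_fg: "x # w \<in> carrier (free_group n) \<Longrightarrow>
   x # w = [x] \<otimes>\<^bsub>free_group n\<^esub> w \<and> [x] \<in> carrier (free_group n) \<and> w \<in> carrier (free_group n)"
  by (auto simp: carrier_fg mult_fg reduce_rd dest: rd_tl)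



fun Dg :: "('g, 'b) monoid_scheme \<Rightarrow> nat \<Rightarrow> ('g \<Rightarrow> real) \<Rightarrow> bool" where
  "Dg G 0 f = (\<forall>h\<in>carrier G. f h = 0)"
| "Dg G (Suc k) f = (\<forall>g\<in>carrier G. Dg G k (diffop G g f))"

definition Tr :: "('g, 'b) monoid_scheme \<Rightarrow> 'g \<Rightarrow> ('g \<Rightarrow> real) \<Rightarrow> 'g \<Rightarrow> real" where
  "Tr G a f h = f (inv\<^bsub>G\<^esub> a \<otimes>\<^bsub>G\<^esub> h)"

definition lowers :: "('g, 'b) monoid_scheme \<Rightarrow> nat \<Rightarrow> 'g \<Rightarrow> bool" where
  "lowers G m u \<longleftrightarrow> u \<in> carrier G \<and> (\<forall>j f. Dg G (j + m) f \<longrightarrow> Dg G j (diffop G u f))"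

lemma diffop_add: "diffop G g (\<lambda>h. f h + f' h) = (\<lambda>h. diffop G g f h + diffop G g f' h)"
  by (auto simp: diffop_def)
lemma diffop_diff: "diffop G g (\<lambda>h. f h - f' h) = (\<lambda>h. diffop G g f h - diffop G g f' h)"
  by (auto simp: diffop_def)
lemma diffop_neg: "diffop G g (\<lambda>h. - f h) = (\<lambda>h. - diffop G g f h)"
  by (auto simp: diffop_def)
lemma diffop_zero: "diffop G g (\<lambda>h. 0) = (\<lambda>h. 0)"
  by (auto simp: diffop_def)

lemma Dg_add: "Dg G k f \<Longrightarrow> Dg G k f' \<Longrightarrow> Dg G k (\<lambda>h. f h + f' h)"
  by (induction k arbitrary: f f') (auto simp: diffop_add)
lemma Dg_diff: "Dg G k f \<Longrightarrow> Dg G k f' \<Longrightarrow> Dg G k (\<lambda>h. f h - f' h)"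
  by (induction k arbitrary: f f') (auto simp: diffop_diff)
lemma Dg_neg: "Dg G k f \<Longrightarrow> Dg G k (\<lambda>h. - f h)"
  by (induction k arbitrary: f) (auto simp: diffop_neg)
lemma Dg_zero: "Dg G k (\<lambda>h. 0)"
  by (induction k) (auto simp: diffop_zero)

lemma foldr_Dg:
  "(\<forall>gs. length gs = k \<and> set gs \<subseteq> carrier G \<longrightarrow> (\<forall>h\<in>carrier G. foldr (diffop G) gs f h = 0))
   \<longleftrightarrow> Dg G k f"
proof (induction k arbitrary: f)
  case 0
  then show ?case by auto
next
  case (Suc k)
  have "(\<forall>gs. length gs = Suc k \<and> set gs \<subseteq> carrier G \<longrightarrow> (\<forall>h\<in>carrier G. foldr (diffop G) gs f h = 0))
     \<longleftrightarrow> (\<forall>g\<in>carrier G. \<forall>gs. length gs = k \<and> set gs \<subseteq> carrier G \<longrightarrow> (\<forall>h\<in>carrier G. foldr (diffop G) gs (diffop G g f) h = 0))"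
  proof (intro iffI ballI allI impI)
    fix g gs h assume A: "\<forall>gs. length gs = Suc k \<and> set gs \<subseteq> carrier G \<longrightarrow> (\<forall>h\<in>carrier G. foldr (diffop G) gs f h = 0)"
      and g: "g \<in> carrier G" and gs: "length gs = k \<and> set gs \<subseteq> carrier G" and h: "h \<in> carrier G"
    have "foldr (diffop G) (gs @ [g]) f h = 0" using A[rule_format, of "gs @ [g]" h] g gs h by auto
    then show "foldr (diffop G) gs (diffop G g f) h = 0" by simp
  next
    fix gs h assume A: "\<forall>g\<in>carrier G. \<forall>gs. length gs = k \<and> set gs \<subseteq> carrier G \<longrightarrow> (\<forall>h\<in>carrier G. foldr (diffop G) gs (diffop G g f) h = 0)"
      and gs: "length gs = Suc k \<and> set gs \<subseteq> carrier G" and h: "h \<in> carrier G"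
    obtain gs' g where e: "gs = gs' @ [g]" using gs by (metis length_Suc_conv_rev)
    show "foldr (diffop G) gs f h = 0" using A gs h unfolding e by auto
  qed
  then show ?case using Suc by simp
qed

lemma poly_deg_le_Dg: "poly_deg_le G k f \<longleftrightarrow> Dg G (Suc k) f"
  unfolding poly_deg_le_def using foldr_Dg[of "Suc k" G f] by blast

context group begin

lemma Dg_cong: "Dg G k f \<Longrightarrow> (\<And>h. h\<in>carrier G \<Longrightarrow> f h = f' h) \<Longrightarrow> Dg G k f'"
proof (induction k arbitrary: f f')
  case 0 then show ?case by auto
next
  case (Suc k)
  show ?case
  proof (simp, intro ballI)
    fix g assume g: "g \<in> carrier G"
    have h1: "Dg G k (diffop G g f)" using Suc.prems(1) g by simp
    show "Dg G k (diffop G g f')"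
      by (rule Suc.IH[OF h1]) (use Suc.prems(2) g in \<open>auto simp: diffop_def\<close>)
  qed
qed

lemma Dg_mono: "Dg G k f \<Longrightarrow> Dg G (Suc k) f"
  by (induction k arbitrary: f) (auto simp: diffop_def)

lemma Dg_mono_add: "Dg G k f \<Longrightarrow> Dg G (k + t) f"
  by (induction t) (simp_all del: Dg.simps add: Dg_mono)

lemma Dg_mono_le: "k \<le> k' \<Longrightarrow> Dg G k f \<Longrightarrow> Dg G k' f"
  by (metis Dg_mono_add le_Suc_ex)

lemma Dg_diffop: "g \<in> carrier G \<Longrightarrow> Dg G k f \<Longrightarrow> Dg G k (diffop G g f)"
proof (cases k)
  case 0 assume "g \<in> carrier G" "Dg G k f" then show ?thesis using 0 by (auto simp: diffop_def)
next
  case (Suc k') assume "g \<in> carrier G" "Dg G k f"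
  then have "Dg G k' (diffop G g f)" using Suc by simp
  then show ?thesis using Suc Dg_mono by simp
qed

lemma Dg_Tr: "a \<in> carrier G \<Longrightarrow> Dg G k f \<Longrightarrow> Dg G k (Tr G a f)"
proof -
  assume a: "a \<in> carrier G" and f: "Dg G k f"
  have "Dg G k (\<lambda>h. f h + diffop G a f h)" by (rule Dg_add[OF f Dg_diffop[OF a f]])
  then show ?thesis by (rule Dg_cong) (simp add: Tr_def diffop_def)
qed

lemma Dg_lmult: "a \<in> carrier G \<Longrightarrow> Dg G k f \<Longrightarrow> Dg G k (\<lambda>h. f (a \<otimes> h))"
proof -
  assume a: "a \<in> carrier G" and f: "Dg G k f"
  show ?thesis by (rule Dg_cong[OF Dg_Tr[of "inv a", OF _ f]]) (use a in \<open>auto simp: Tr_def\<close>)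
qed

lemma diffop_mult_eq: "u \<in> carrier G \<Longrightarrow> v \<in> carrier G \<Longrightarrow> h \<in> carrier G \<Longrightarrow>
   diffop G (u \<otimes> v) f h = Tr G u (diffop G v f) h + diffop G u f h"
  by (simp add: diffop_def Tr_def inv_mult_group m_assoc)

lemma diffop_inv_eq: "u \<in> carrier G \<Longrightarrow> h \<in> carrier G \<Longrightarrow>
   diffop G (inv u) f h = - Tr G (inv u) (diffop G u f) h"
  by (simp add: diffop_def Tr_def m_assoc[symmetric])

lemma diffop_comm_eq: "x \<in> carrier G \<Longrightarrow> y \<in> carrier G \<Longrightarrow> h \<in> carrier G \<Longrightarrow>
   diffop G (x \<otimes> y \<otimes> inv x \<otimes> inv y) f h =
   diffop G x (diffop G y (\<lambda>h. f (y \<otimes> x \<otimes> h))) h - diffop G y (diffop G x (\<lambda>h. f (y \<otimes> x \<otimes> h))) h"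
proof -
  assume x: "x \<in> carrier G" and y: "y \<in> carrier G" and h: "h \<in> carrier G"
  have e1: "inv (x \<otimes> y \<otimes> inv x \<otimes> inv y) \<otimes> h = y \<otimes> x \<otimes> (inv y \<otimes> (inv x \<otimes> h))"
    using x y h by (simp add: inv_mult_group m_assoc)
  have e3: "y \<otimes> x \<otimes> inv x = y" using x y by (simp add: m_assoc)
  have e2: "y \<otimes> x \<otimes> (inv x \<otimes> (inv y \<otimes> h)) = h"
    using x y h by (simp add: m_assoc[symmetric] e3)
  show ?thesis unfolding diffop_def e1 e2 by simp
qed

lemma Dg_mult: "u \<in> carrier G \<Longrightarrow> v \<in> carrier G \<Longrightarrow> Dg G k (diffop G u f) \<Longrightarrow> Dg G k (diffop G v f)
   \<Longrightarrow> Dg G k (diffop G (u \<otimes> v) f)"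
  by (rule Dg_cong[OF Dg_add[OF Dg_Tr]]) (auto simp: diffop_mult_eq)

lemma Dg_inv: "u \<in> carrier G \<Longrightarrow> Dg G k (diffop G u f) \<Longrightarrow> Dg G k (diffop G (inv u) f)"
  by (rule Dg_cong[OF Dg_neg[OF Dg_Tr]]) (auto simp: diffop_inv_eq)

lemma lowers_one: "lowers G m \<one>"
  unfolding lowers_def by (auto intro!: Dg_cong[OF Dg_zero] simp: diffop_def)

lemma lowers_mult: "lowers G m u \<Longrightarrow> lowers G m v \<Longrightarrow> lowers G m (u \<otimes> v)"
  unfolding lowers_def by (auto intro!: Dg_mult)

lemma lowers_inv: "lowers G m u \<Longrightarrow> lowers G m (inv u)"
  unfolding lowers_def by (auto intro!: Dg_inv)

lemma lowers_gen: "g \<in> carrier G \<Longrightarrow> lowers G 1 g"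
  unfolding lowers_def by auto

lemma lowers_comm: "x \<in> carrier G \<Longrightarrow> lowers G m y \<Longrightarrow> lowers G (Suc m) (x \<otimes> y \<otimes> inv x \<otimes> inv y)"
proof -
  assume x: "x \<in> carrier G" and ly: "lowers G m y"
  then have y: "y \<in> carrier G" unfolding lowers_def by auto
  show ?thesis unfolding lowers_def
  proof (intro conjI allI impI)
    show "x \<otimes> y \<otimes> inv x \<otimes> inv y \<in> carrier G" using x y by simp
    fix j f assume f: "Dg G (j + Suc m) f"
    define f' where "f' = (\<lambda>h. f (y \<otimes> x \<otimes> h))"
    have f': "Dg G (Suc (j + m)) f'" unfolding f'_def using f x y by (intro Dg_lmult) auto
    have a: "Dg G j (diffop G x (diffop G y f'))"
    proof -
      have "Dg G (Suc j) (diffop G y f')" using ly f' unfolding lowers_def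
        by (metis add_Suc)
      then show ?thesis using x by simp
    qed
    have b: "Dg G j (diffop G y (diffop G x f'))"
      using ly f' x unfolding lowers_def by auto
    show "Dg G j (diffop G (x \<otimes> y \<otimes> inv x \<otimes> inv y) f)"
      by (rule Dg_cong[OF Dg_diff[OF a b]]) (simp add: diffop_comm_eq x y f'_def)
  qed
qed

lemma lowers_generate: "u \<in> generate G H \<Longrightarrow> (\<And>h. h \<in> H \<Longrightarrow> lowers G m h) \<Longrightarrow> lowers G m u"
  by (induction u rule: generate.induct) (auto intro: lowers_one lowers_mult lowers_inv)

lemma lower_central_lowers: "u \<in> lower_central G (Suc k) \<Longrightarrow> lowers G (Suc k) u"
proof (induction k arbitrary: u)
  case 0
  then have "u \<in> carrier G" by simp
  then have "lowers G 1 u" by (rule lowers_gen)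
  then show ?case by simp
next
  case (Suc k)
  have "u \<in> generate G {x \<otimes> y \<otimes> inv x \<otimes> inv y | x y. x \<in> carrier G \<and> y \<in> lower_central G (Suc k)}"
    using Suc.prems by simp
  then show ?case
  proof (rule lowers_generate)
    fix h assume "h \<in> {x \<otimes> y \<otimes> inv x \<otimes> inv y | x y. x \<in> carrier G \<and> y \<in> lower_central G (Suc k)}"
    then obtain x y where "h = x \<otimes> y \<otimes> inv x \<otimes> inv y" "x \<in> carrier G" "y \<in> lower_central G (Suc k)" by blast
    then show "lowers G (Suc (Suc k)) h" using lowers_comm Suc.IH by blast
  qed
qed

end


fun Xi :: "(nat \<Rightarrow> 'g \<Rightarrow> real) \<Rightarrow> ((nat \<times> bool) list \<Rightarrow> 'g) \<Rightarrow> (nat \<times> bool) list \<Rightarrow> real" where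
  "Xi xs ph [] = 0"
| "Xi xs ph (x # w) = (if snd x then Xi xs ph w - xs (fst x) (ph (x # w)) else Xi xs ph w + xs (fst x) (ph w))"

lemma (in group_hom) Dg_pull_iff:
  assumes surj: "h ` carrier G = carrier H"
  shows "Dg G k (\<lambda>x. f (h x)) \<longleftrightarrow> Dg H k f"
proof (induction k arbitrary: f)
  case 0
  have "(\<forall>y\<in>carrier H. f y = 0) \<longleftrightarrow> (\<forall>x\<in>carrier G. f (h x) = 0)"
    unfolding surj[symmetric] by blast
  then show ?case by simp
next
  case (Suc k)
  have eq: "Dg G k (diffop G g (\<lambda>x. f (h x))) \<longleftrightarrow> Dg H k (diffop H (h g) f)" if g: "g \<in> carrier G" for g
  proof -
    have pt: "diffop G g (\<lambda>x. f (h x)) x = diffop H (h g) f (h x)" if "x \<in> carrier G" for x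
      using g that by (simp add: diffop_def)
    have "Dg G k (diffop G g (\<lambda>x. f (h x))) \<longleftrightarrow> Dg G k (\<lambda>x. diffop H (h g) f (h x))"
      by (intro iffI; erule G.Dg_cong; simp add: pt)
    also have "\<dots> \<longleftrightarrow> Dg H k (diffop H (h g) f)" by (rule Suc.IH)
    finally show ?thesis .
  qed
  have "Dg G (Suc k) (\<lambda>x. f (h x)) \<longleftrightarrow> (\<forall>g\<in>carrier G. Dg H k (diffop H (h g) f))"
    using eq by simp
  also have "\<dots> \<longleftrightarrow> (\<forall>g'\<in>carrier H. Dg H k (diffop H g' f))" unfolding surj[symmetric] by blast
  finally show ?case by simp
qed

theorem lemma7p13:
  fixes G :: "('g, 'b) monoid_scheme" and d n d' :: nat and g :: "nat \<Rightarrow> 'g"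
    and \<xi>s :: "nat \<Rightarrow> 'g \<Rightarrow> real"
  assumes "free_nilpotent_with_gens G d n g"
    and "d' < d"
    and "\<forall>i<n. poly_deg_le G d' (\<xi>s i)"
  shows "\<exists>\<xi>. poly_deg_le G (Suc d') \<xi> \<and>
           (\<forall>i<n. \<forall>h\<in>carrier G. diffop G (g i) \<xi> h = \<xi>s i h)"
proof -
  define F where "F = free_group n"
  from assms(1) obtain \<phi> where grp: "group G" and phom: "\<phi> \<in> hom F G"
    and surj: "\<phi> ` carrier F = carrier G" and ker: "kernel F G \<phi> = lower_central F (Suc d)"
    and gen: "\<forall>i<n. \<phi> [(i, True)] = g i"
    unfolding free_nilpotent_with_gens_def F_def by blast
  interpret F: group F unfolding F_def by (rule group_fg)
  interpret G: group G by (rule grp)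
  interpret hom: group_hom F G \<phi> by (simp add: group_hom_def group_hom_axioms_def phom F.group_axioms grp)
  have eC: "[(i, True)] \<in> carrier F" if "i < n" for i using that by (simp add: F_def carrier_fg)
  have einv: "inv\<^bsub>F\<^esub> [(i, True)] = [(i, False)]" if "i < n" for i
    using that unfolding F_def by (rule inv_gen_fg)
  define \<Xi> where "\<Xi> = Xi \<xi>s \<phi>"
  have A: "diffop F [(i, True)] \<Xi> h = \<xi>s i (\<phi> h)" if i: "i < n" and h: "h \<in> carrier F" for i h
  proof -
    have rh: "reduce h = h" using h by (simp add: F_def carrier_fg reduce_rd)
    have m: "inv\<^bsub>F\<^esub> [(i, True)] \<otimes>\<^bsub>F\<^esub> h = step (i, False) h"
      using einv[OF i] rh by (simp add: F_def mult_fg reduce_foldr)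
    show ?thesis
    proof (cases h)
      case Nil then show ?thesis using m by (simp add: diffop_def step_def \<Xi>_def)
    next
      case (Cons y ys)
      show ?thesis
      proof (cases "cancels (i, False) y")
        case True
        then have "y = (i, True)" by (cases y) (auto simp: cancels_def)
        then show ?thesis using m Cons True by (simp add: diffop_def step_def \<Xi>_def)
      next
        case False
        then show ?thesis using m Cons by (simp add: diffop_def step_def \<Xi>_def)
      qed
    qed
  qed
  have B: "Dg F (Suc d') (\<lambda>h. \<xi>s i (\<phi> h))" if i: "i < n" for i
  proof -
    have "Dg G (Suc d') (\<xi>s i)" using assms(3) i poly_deg_le_Dg by blast
    then show ?thesis by (simp only: hom.Dg_pull_iff[OF surj])
  qed
  have C: "w \<in> carrier F \<Longrightarrow> Dg F (Suc d') (diffop F w \<Xi>)" for w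
  proof (induction w)
    case Nil
    have "[] = \<one>\<^bsub>F\<^esub>" by (simp add: F_def one_fg)
    have "Dg F (Suc d') (diffop F \<one>\<^bsub>F\<^esub> \<Xi>)" by (rule F.Dg_cong[OF Dg_zero]) (simp add: diffop_def)
    then show ?case using \<open>[] = \<one>\<^bsub>F\<^esub>\<close> by simp
  next
    case (Cons x w)
    have dec: "x # w = [x] \<otimes>\<^bsub>F\<^esub> w" "[x] \<in> carrier F" "w \<in> carrier F"
      using cons_fg[of x w n] Cons.prems by (auto simp: F_def)
    obtain i b where x: "x = (i, b)" by force
    have i: "i < n" using Cons.prems x by (auto simp: F_def carrier_fg)
    have dT: "Dg F (Suc d') (diffop F [(i, True)] \<Xi>)"
        by (rule F.Dg_cong[OF B[OF i]]) (simp add: A[OF i])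
    have dx: "Dg F (Suc d') (diffop F [x] \<Xi>)"
    proof (cases b)
      case True
      then show ?thesis using x dT by simp
    next
      case False
      from dT have "Dg F (Suc d') (diffop F (inv\<^bsub>F\<^esub> [(i, True)]) \<Xi>)"
        using eC[OF i] by (rule_tac F.Dg_inv) auto
      then show ?thesis using einv[OF i] x False by simp
    qed
    show ?case using F.Dg_mult[OF dec(2) dec(3) dx Cons.IH[OF dec(3)]] dec(1) by simp
  qed
  have CC: "Dg F (Suc (Suc d')) \<Xi>" using C by simp
  have D: "\<Xi> w = \<Xi> w'" if w: "w \<in> carrier F" and w': "w' \<in> carrier F" and e: "\<phi> w = \<phi> w'" for w w'
  proof -
    define u where "u = w' \<otimes>\<^bsub>F\<^esub> inv\<^bsub>F\<^esub> w"
    have uC: "u \<in> carrier F" using w w' by (simp add: u_def)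
    have "\<phi> u = \<one>\<^bsub>G\<^esub>" using w w' e by (simp add: u_def)
    then have "u \<in> lower_central F (Suc d)" using uC ker by (auto simp: kernel_def)
    then have lu: "lowers F (Suc d) u" by (rule F.lower_central_lowers)
    have "Dg F (0 + Suc d) \<Xi>" by (rule F.Dg_mono_le[OF _ CC]) (use assms(2) in simp)
    then have "Dg F 0 (diffop F u \<Xi>)" using lu unfolding lowers_def by blast
    then have "diffop F u \<Xi> w' = 0" using w' by simp
    moreover have "inv\<^bsub>F\<^esub> u \<otimes>\<^bsub>F\<^esub> w' = w"
      using w w' by (simp add: u_def F.inv_mult_group F.m_assoc)
    ultimately show ?thesis by (simp add: diffop_def)
  qed
  define \<xi> where "\<xi> y = \<Xi> (SOME w. w \<in> carrier F \<and> \<phi> w = y)" for y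
  have E: "\<xi> (\<phi> w) = \<Xi> w" if w: "w \<in> carrier F" for w
  proof -
    have "\<exists>v. v \<in> carrier F \<and> \<phi> v = \<phi> w" using w by blast
    then have "(SOME v. v \<in> carrier F \<and> \<phi> v = \<phi> w) \<in> carrier F \<and> \<phi> (SOME v. v \<in> carrier F \<and> \<phi> v = \<phi> w) = \<phi> w"
      by (rule someI_ex)
    then show ?thesis unfolding \<xi>_def using D w by blast
  qed
  have P: "poly_deg_le G (Suc d') \<xi>"
  proof -
    have "Dg F (Suc (Suc d')) (\<lambda>x. \<xi> (\<phi> x))" by (rule F.Dg_cong[OF CC]) (simp add: E)
    then show ?thesis using hom.Dg_pull_iff[OF surj] by (simp only: poly_deg_le_Dg)
  qed
  have Q: "diffop G (g i) \<xi> h = \<xi>s i h" if i: "i < n" and h: "h \<in> carrier G" for i h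
  proof -
    obtain w where w: "w \<in> carrier F" and hw: "h = \<phi> w" using h surj by blast
    have gi: "g i = \<phi> [(i, True)]" using gen i by simp
    have m: "inv\<^bsub>G\<^esub> (g i) \<otimes>\<^bsub>G\<^esub> h = \<phi> (inv\<^bsub>F\<^esub> [(i, True)] \<otimes>\<^bsub>F\<^esub> w)"
      using eC[OF i] w by (simp add: gi hw)
    have mc: "inv\<^bsub>F\<^esub> [(i, True)] \<otimes>\<^bsub>F\<^esub> w \<in> carrier F" using eC[OF i] w by simp
    have "diffop G (g i) \<xi> h = \<xi> (\<phi> (inv\<^bsub>F\<^esub> [(i, True)] \<otimes>\<^bsub>F\<^esub> w)) - \<xi> (\<phi> w)"
      by (simp only: diffop_def m) (simp add: hw)
    also have "\<dots> = \<Xi> (inv\<^bsub>F\<^esub> [(i, True)] \<otimes>\<^bsub>F\<^esub> w) - \<Xi> w" using E[OF mc] E[OF w] by simp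
    also have "\<dots> = diffop F [(i, True)] \<Xi> w" by (simp add: diffop_def)
    finally have "diffop G (g i) \<xi> h = diffop F [(i, True)] \<Xi> w" .
    then show ?thesis using A[OF i w] hw by simp
  qed
  show ?thesis using P Q by blast
qed


end
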